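(* States $|\psi\rangle\in H_s$ that cannot be trained by QAOA with target state $|0\rangle^{\otimes n}$ necessarily satisfy \begin{align} A_1=\langle e_1|\psi\rangle \propto \langle 0|^{\otimes n}\mathcal{H}_x|\psi\rangle\propto\langle 0|^{\otimes n}X|\psi\rangle=0,\\ |A_2|=|\langle e_2|\psi\rangle|\le\sqrt{\dfrac{2n}{n-1}}\,|\langle 0|^{\otimes n}|\psi\rangle| . \end{align}
   Context: QAOA on $n$ qubits prepares $|\psi_p(\boldsymbol\gamma,\boldsymbol\beta)\rangle=\prod_{k=1}^p e^{-i\beta_k\mathcal{H}_x}e^{-i\gamma_k|\boldsymbol t\rangle\langle\boldsymbol t|}|+\rangle^{\otimes n}$ with $\mathcal{H}_x=\sum_{i=1}^n X_i$ (Pauli $X$ on qubit $i$), $\gamma_k\in[0,2\pi)$, $\beta_k\in[0,\pi)$; here the target is $|\boldsymbol t\rangle=|0\rangle^{\otimes n}$ and the objective is the overlap $|\langle \boldsymbol t|\psi_p\rangle|^2$. In layerwise training, one layer is added at a time and only the new layer's parameters $(\beta_c,\gamma_c)$ are optimized, so $|\psi_c\rangle=e^{-i\beta_c\mathcal{H}_x}e^{-i\gamma_c|0\rangle^{\otimes n}\langle 0|^{\otimes n}}|\psi_{c-1}\rangle$. $H_s$ is the symmetric subspace, spanned by states invariant under every permutation $P_{ij}$ of two qubits; it has the orthonormal Dicke basis $|e_k\rangle$, $k=0,\dots,n$, where $|e_k\rangle$ is the normalized uniform superposition of all $n$-qubit computational basis states of Hamming weight $k$ (so $|e_0\rangle=|0\rangle^{\otimes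 n}$). All QAOA states with this target lie in $H_s$, and $A_k=\langle e_k|\psi\rangle$. A state "cannot be trained" means that applying a further layer $e^{-i\beta\mathcal{H}_x}e^{-i\gamma|0\rangle^{\otimes n}\langle 0|^{\otimes n}}$ and optimizing over $(\beta,\gamma)$ cannot increase the overlap with $|0\rangle^{\otimes n}$, i.e. the function $g(\beta)=\cos^n\beta\,\big(|A_0|+|\sum_{k=1}^n(-i\tan\beta)^kA_k\sqrt{C_n^k}|\big)$ (the overlap modulus already maximized over $\gamma$) has its global maximum at $\beta=0$. *)

theory Defs
  imports Complex_Main
begin

text \<open>A symmetric state is given by its Dicke-basis amplitudes A k = <e_k|psi>, k = 0..n.
  g n A beta is the overlap modulus with |0...0> after one further QAOA layer,
  already maximized over gamma (formula from the paper, verbatim).\<close>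

definition qaoa_g :: "nat \<Rightarrow> (nat \<Rightarrow> complex) \<Rightarrow> real \<Rightarrow> real" where
  "qaoa_g n A \<beta> = cos \<beta> ^ n *
     (cmod (A 0) + cmod (\<Sum>k=1..n. (- \<i> * complex_of_real (tan \<beta>)) ^ k * A k
                                     * complex_of_real (sqrt (real (n choose k)))))"

definition cannot_be_trained :: "nat \<Rightarrow> (nat \<Rightarrow> complex) \<Rightarrow> bool" where
  "cannot_be_trained n A \<longleftrightarrow> (\<forall>\<beta>\<in>{0..<pi}. qaoa_g n A \<beta> \<le> qaoa_g n A 0)"

end

theory Submission
  imports Defs "HOL-Analysis.Analysis"
begin

lemma tan_ge_self: "0 \<le> x \<Longrightarrow> x < pi/2 \<Longrightarrow> x \<le> tan (x::real)"
proof -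
  assume a: "0 \<le> x" "x < pi/2"
  have "0 \<le> tan x" using a tan_pos_pi2_le by blast
  hence "arctan (tan x) \<le> tan x" by (rule arctan_le_self)
  moreover have "arctan (tan x) = x" using a by (intro arctan_tan) auto
  ultimately show ?thesis by simp
qed

lemma cos_ge_quad: "1 - x^2/2 \<le> cos (x::real)"
proof -
  have "cos x = cos (2 * (x/2))" by simp
  also have "\<dots> = 1 - 2 * sin (x/2) ^ 2" by (rule cos_double_sin)
  finally have e: "cos x = 1 - 2 * sin (x/2) ^ 2" .
  have "\<bar>sin (x/2)\<bar> \<le> \<bar>x/2\<bar>" by (rule abs_sin_x_le_abs_x)
  hence "sin (x/2) ^ 2 \<le> (x/2)^2"
    by (metis abs_ge_zero power2_abs power_mono)
  thus ?thesis using e by (simp add: power2_eq_square field_simps)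
qed

lemma main_bound:
  fixes n :: nat and A :: "nat \<Rightarrow> complex" and \<beta> :: real
  assumes tr: "cannot_be_trained n A" and b: "0 < \<beta>" "\<beta> < 1"
  shows "cos \<beta> ^ n * cmod (\<Sum>k=1..n. (- \<i> * complex_of_real (tan \<beta>)) ^ k * A k
                                     * complex_of_real (sqrt (real (n choose k))))
     \<le> real n * \<beta>^2 / 2 * cmod (A 0)"
proof -
  define S where "S = cmod (\<Sum>k=1..n. (- \<i> * complex_of_real (tan \<beta>)) ^ k * A k
                                     * complex_of_real (sqrt (real (n choose k))))"
  have "pi/2 > 1" using pi_gt3 by linarith
  hence bpi: "\<beta> \<in> {0..<pi}" using b by auto
  have g0: "qaoa_g n A 0 = cmod (A 0)" unfolding qaoa_g_def
    by (simp add: zero_power)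
  have "qaoa_g n A \<beta> \<le> cmod (A 0)" using tr bpi g0 unfolding cannot_be_trained_def by auto
  hence le: "cos \<beta> ^ n * (cmod (A 0) + S) \<le> cmod (A 0)" unfolding qaoa_g_def S_def .
  have "1 - \<beta>^2/2 \<le> cos \<beta>" by (rule cos_ge_quad)
  have "-1 \<le> - (\<beta>^2/2)" using b by (simp add: power2_eq_square) (smt (verit) mult_le_one)
  hence "1 + real n * (- (\<beta>^2/2)) \<le> (1 + (- (\<beta>^2/2)))^n" by (rule Bernoulli_inequality)
  also have "\<dots> \<le> cos \<beta> ^ n"
    using \<open>1 - \<beta>^2/2 \<le> cos \<beta>\<close> \<open>-1 \<le> - (\<beta>^2/2)\<close>
    by (intro power_mono) (auto simp: power2_eq_square)
  finally have cn: "1 - real n * \<beta>^2/2 \<le> cos \<beta> ^ n" by simp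
  have "cos \<beta> ^ n * S \<le> cmod (A 0) - cos \<beta> ^ n * cmod (A 0)" using le by (simp add: algebra_simps)
  also have "\<dots> \<le> cmod (A 0) - (1 - real n * \<beta>^2/2) * cmod (A 0)"
    using cn by (intro diff_left_mono mult_right_mono) auto
  also have "\<dots> = real n * \<beta>^2 / 2 * cmod (A 0)" by (simp add: algebra_simps)
  finally show ?thesis unfolding S_def .
qed


lemma fac1:
  fixes z :: complex
  shows "(\<Sum>k=1..n. (- \<i> * z) ^ k * A k * complex_of_real (sqrt (real (n choose k))))
     = z * (\<Sum>k=1..n. (- \<i>) ^ k * z ^ (k - 1) * A k * complex_of_real (sqrt (real (n choose k))))"
  unfolding sum_distrib_left
proof (rule sum.cong[OF refl])
  fix k assume "k \<in> {1..n}"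
  hence "z ^ k = z * z ^ (k - 1)" by (cases k) auto
  thus "(- \<i> * z) ^ k * A k * complex_of_real (sqrt (real (n choose k))) =
    z * ((- \<i>) ^ k * z ^ (k - 1) * A k * complex_of_real (sqrt (real (n choose k))))"
    by (simp only: power_mult_distrib mult_ac)
qed

lemma fac2:
  fixes z :: complex
  assumes "A 1 = 0" "2 \<le> n"
  shows "(\<Sum>k=1..n. (- \<i> * z) ^ k * A k * complex_of_real (sqrt (real (n choose k))))
     = z^2 * (\<Sum>k=2..n. (- \<i>) ^ k * z ^ (k - 2) * A k * complex_of_real (sqrt (real (n choose k))))"
proof -
  have "(\<Sum>k=1..n. (- \<i> * z) ^ k * A k * complex_of_real (sqrt (real (n choose k))))
     = (- \<i> * z) ^ 1 * A 1 * complex_of_real (sqrt (real (n choose 1))) +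
       (\<Sum>k=Suc 1..n. (- \<i> * z) ^ k * A k * complex_of_real (sqrt (real (n choose k))))"
    using assms by (intro sum.atLeast_Suc_atMost) auto
  also have "\<dots> = (\<Sum>k=2..n. (- \<i> * z) ^ k * A k * complex_of_real (sqrt (real (n choose k))))"
    using assms by (simp add: numeral_2_eq_2)
  also have "\<dots> = z^2 * (\<Sum>k=2..n. (- \<i>) ^ k * z ^ (k - 2) * A k * complex_of_real (sqrt (real (n choose k))))"
    unfolding sum_distrib_left
  proof (rule sum.cong[OF refl])
    fix k assume "k \<in> {2..n}"
    hence "z ^ k = z^2 * z ^ (k - 2)" by (metis atLeastAtMost_iff le_add_diff_inverse power_add)
    thus "(- \<i> * z) ^ k * A k * complex_of_real (sqrt (real (n choose k))) =
      z^2 * ((- \<i>) ^ k * z ^ (k - 2) * A k * complex_of_real (sqrt (real (n choose k))))"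
      by (simp only: power_mult_distrib mult_ac)
  qed
  finally show ?thesis .
qed

lemma P1_0:
  assumes "1 \<le> n"
  shows "(\<Sum>k=1..n. (- \<i>) ^ k * (0::complex) ^ (k - 1) * A k * complex_of_real (sqrt (real (n choose k))))
    = - \<i> * A 1 * complex_of_real (sqrt (real n))"
proof -
  have "(\<Sum>k=1..n. (- \<i>) ^ k * (0::complex) ^ (k - 1) * A k * complex_of_real (sqrt (real (n choose k))))
    = (- \<i>) ^ 1 * (0::complex) ^ (1 - 1) * A 1 * complex_of_real (sqrt (real (n choose 1))) +
     (\<Sum>k=Suc 1..n. (- \<i>) ^ k * (0::complex) ^ (k - 1) * A k * complex_of_real (sqrt (real (n choose k))))"
    using assms by (intro sum.atLeast_Suc_atMost) auto
  also have "(\<Sum>k=Suc 1..n. (- \<i>) ^ k * (0::complex) ^ (k - 1) * A k * complex_of_real (sqrt (real (n choose k)))) = 0"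
    by (intro sum.neutral) auto
  finally show ?thesis by simp
qed

lemma P2_0:
  assumes "2 \<le> n"
  shows "(\<Sum>k=2..n. (- \<i>) ^ k * (0::complex) ^ (k - 2) * A k * complex_of_real (sqrt (real (n choose k))))
    = - A 2 * complex_of_real (sqrt (real (n choose 2)))"
proof -
  have "(\<Sum>k=2..n. (- \<i>) ^ k * (0::complex) ^ (k - 2) * A k * complex_of_real (sqrt (real (n choose k))))
    = (- \<i>) ^ 2 * (0::complex) ^ (2 - 2) * A 2 * complex_of_real (sqrt (real (n choose 2))) +
     (\<Sum>k=Suc 2..n. (- \<i>) ^ k * (0::complex) ^ (k - 2) * A k * complex_of_real (sqrt (real (n choose k))))"
    using assms by (intro sum.atLeast_Suc_atMost) auto
  also have "(\<Sum>k=Suc 2..n. (- \<i>) ^ k * (0::complex) ^ (k - 2) * A k * complex_of_real (sqrt (real (n choose k)))) = 0"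
    by (intro sum.neutral) auto
  finally show ?thesis by (simp add: power2_eq_square)
qed


theorem proposition1:
  fixes n :: nat and A :: "nat \<Rightarrow> complex"
  assumes "n \<ge> 2"
    and "(\<Sum>k=0..n. (cmod (A k))\<^sup>2) = 1"
    and "cannot_be_trained n A"
  shows "A 1 = 0 \<and> cmod (A 2) \<le> sqrt (2 * real n / (real n - 1)) * cmod (A 0)"
proof -
  note tr = assms(3)
  have pi1: "1 < pi/2" using pi_gt3 by linarith
  have cpos: "0 < cos \<beta>" if "0 < \<beta>" "\<beta> < 1" for \<beta> :: real
    using that pi1 by (intro cos_gt_zero) auto
  have tge: "\<beta> \<le> tan \<beta>" if "0 < \<beta>" "\<beta> < 1" for \<beta> :: real
    using that pi1 by (intro tan_ge_self) auto
  define P1 where "P1 z = (\<Sum>k=1..n. (- \<i>) ^ k * z ^ (k - 1) * A k * complex_of_real (sqrt (real (n choose k))))" for z :: complex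
  have ev1: "eventually (\<lambda>\<beta>. cos \<beta> ^ n * cmod (P1 (of_real (tan \<beta>))) \<le> real n * \<beta> / 2 * cmod (A 0)) (at_right 0)"
  proof (rule eventually_at_rightI[of 0 1])
    fix \<beta> :: real assume "\<beta> \<in> {0<..<1}"
    hence b: "0 < \<beta>" "\<beta> < 1" by auto
    have "cos \<beta> ^ n * (\<beta> * cmod (P1 (of_real (tan \<beta>)))) \<le> cos \<beta> ^ n * (tan \<beta> * cmod (P1 (of_real (tan \<beta>))))"
      using cpos[OF b] tge[OF b] by (intro mult_left_mono mult_right_mono) auto
    also have "\<dots> = cos \<beta> ^ n * cmod (\<Sum>k=1..n. (- \<i> * complex_of_real (tan \<beta>)) ^ k * A k
                                     * complex_of_real (sqrt (real (n choose k))))"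
      unfolding fac1 P1_def norm_mult using tge[OF b] b by simp
    also have "\<dots> \<le> real n * \<beta>^2 / 2 * cmod (A 0)" by (rule main_bound[OF tr b])
    finally have "\<beta> * (cos \<beta> ^ n * cmod (P1 (of_real (tan \<beta>)))) \<le> \<beta> * (real n * \<beta> / 2 * cmod (A 0))"
      by (simp add: power2_eq_square algebra_simps)
    thus "cos \<beta> ^ n * cmod (P1 (of_real (tan \<beta>))) \<le> real n * \<beta> / 2 * cmod (A 0)"
      using b by simp
  qed simp
  have lim1: "((\<lambda>\<beta>. cos \<beta> ^ n * cmod (P1 (of_real (tan \<beta>)))) \<longlongrightarrow> cos 0 ^ n * cmod (P1 (of_real (tan 0)))) (at_right 0)"
    unfolding P1_def by (intro tendsto_intros) auto
  have lim1': "((\<lambda>\<beta>. real n * \<beta> / 2 * cmod (A 0)) \<longlongrightarrow> real n * 0 / 2 * cmod (A 0)) (at_right 0)"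
    by (intro tendsto_intros) auto
  have "cos 0 ^ n * cmod (P1 (of_real (tan 0))) \<le> real n * 0 / 2 * cmod (A 0)"
    by (rule tendsto_le[OF _ lim1' lim1 ev1]) simp
  hence "cmod (P1 0) \<le> 0" by simp
  hence "cmod (- \<i> * A 1 * complex_of_real (sqrt (real n))) \<le> 0"
    using P1_0[of n A] assms(1) unfolding P1_def by simp
  hence h: "cmod (A 1) * sqrt (real n) \<le> 0" by (simp add: norm_mult)
  have "sqrt (real n) > 0" using assms(1) by simp
  hence "cmod (A 1) \<le> 0" using h by (simp add: mult_le_0_iff)
  hence A1: "A 1 = 0" by simp
  define P2 where "P2 z = (\<Sum>k=2..n. (- \<i>) ^ k * z ^ (k - 2) * A k * complex_of_real (sqrt (real (n choose k))))" for z :: complex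
  have ev2: "eventually (\<lambda>\<beta>. cos \<beta> ^ n * cmod (P2 (of_real (tan \<beta>))) \<le> real n / 2 * cmod (A 0)) (at_right 0)"
  proof (rule eventually_at_rightI[of 0 1])
    fix \<beta> :: real assume "\<beta> \<in> {0<..<1}"
    hence b: "0 < \<beta>" "\<beta> < 1" by auto
    have "\<beta>^2 \<le> tan \<beta> ^ 2" using tge[OF b] b by (intro power_mono) auto
    hence "cos \<beta> ^ n * (\<beta>^2 * cmod (P2 (of_real (tan \<beta>)))) \<le> cos \<beta> ^ n * (tan \<beta> ^ 2 * cmod (P2 (of_real (tan \<beta>))))"
      using cpos[OF b] by (intro mult_left_mono mult_right_mono) auto
    also have "\<dots> = cos \<beta> ^ n * cmod (\<Sum>k=1..n. (- \<i> * complex_of_real (tan \<beta>)) ^ k * A k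
                                     * complex_of_real (sqrt (real (n choose k))))"
      unfolding fac2[of A n, OF A1 assms(1)] P2_def norm_mult norm_power by simp
    also have "\<dots> \<le> real n * \<beta>^2 / 2 * cmod (A 0)" by (rule main_bound[OF tr b])
    finally have "\<beta>^2 * (cos \<beta> ^ n * cmod (P2 (of_real (tan \<beta>)))) \<le> \<beta>^2 * (real n / 2 * cmod (A 0))"
      by (simp add: algebra_simps)
    thus "cos \<beta> ^ n * cmod (P2 (of_real (tan \<beta>))) \<le> real n / 2 * cmod (A 0)"
      using b by simp
  qed simp
  have lim2: "((\<lambda>\<beta>. cos \<beta> ^ n * cmod (P2 (of_real (tan \<beta>)))) \<longlongrightarrow> cos 0 ^ n * cmod (P2 (of_real (tan 0)))) (at_right 0)"
    unfolding P2_def by (intro tendsto_intros) auto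
  have "cos 0 ^ n * cmod (P2 (of_real (tan 0))) \<le> real n / 2 * cmod (A 0)"
    by (rule tendsto_le[OF _ tendsto_const lim2 ev2]) simp
  hence "cmod (P2 0) \<le> real n / 2 * cmod (A 0)" by simp
  hence "cmod (- A 2 * complex_of_real (sqrt (real (n choose 2)))) \<le> real n / 2 * cmod (A 0)"
    using P2_0[of n A] assms(1) unfolding P2_def by simp
  hence key: "cmod (A 2) * sqrt (real (n choose 2)) \<le> real n / 2 * cmod (A 0)"
    by (simp add: norm_mult)
  have C2: "real (n choose 2) = real n * (real n - 1) / 2"
    using assms(1) by (auto simp add: choose_two field_char_0_class.of_nat_div mod_eq_0_iff_dvd of_nat_diff)
  define a where "a = cmod (A 2)"
  define c where "c = cmod (A 0)"
  define m where "m = real n"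
  have m2: "m \<ge> 2" using assms(1) unfolding m_def by simp
  have a0: "a \<ge> 0" "c \<ge> 0" unfolding a_def c_def by auto
  have k: "a * sqrt (m * (m - 1) / 2) \<le> m / 2 * c" using key C2 unfolding a_def c_def m_def by simp
  have "(a * sqrt (m * (m - 1) / 2))^2 \<le> (m / 2 * c)^2"
    using k a0 m2 by (intro power_mono) auto
  hence "a^2 * (m * (m - 1) / 2) \<le> m^2 / 4 * c^2"
    using m2 by (simp add: power_mult_distrib power_divide)
  hence "a^2 * (m * (m - 1)) \<le> m^2 / 2 * c^2" by (simp add: algebra_simps)
  hence "m * (a^2 * (m - 1)) \<le> m * (m / 2 * c^2)" by (simp add: power2_eq_square algebra_simps)
  hence "a^2 * (m - 1) \<le> m / 2 * c^2" by (rule mult_left_le_imp_le) (use m2 in auto)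
  hence "a^2 \<le> (m / 2 * c^2) / (m - 1)" using m2 by (simp add: pos_le_divide_eq algebra_simps)
  also have "\<dots> = m / (2 * (m - 1)) * c^2" by simp
  also have "\<dots> \<le> 2 * m / (m - 1) * c^2"
  proof (intro mult_right_mono)
    show "m / (2 * (m - 1)) \<le> 2 * m / (m - 1)"
      using m2 by (simp add: divide_right_mono frac_le)
  qed simp
  finally have "sqrt (a^2) \<le> sqrt (2 * m / (m - 1) * c^2)" by (rule real_sqrt_le_mono)
  also have "sqrt (2 * m / (m - 1) * c^2) = sqrt (2 * m / (m - 1)) * c"
    using a0 by (simp only: real_sqrt_mult real_sqrt_abs)
  finally have "a \<le> sqrt (2 * m / (m - 1)) * c" using a0 by simp
  thus ?thesis using A1 unfolding a_def c_def m_def by simp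
qed

end
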